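(* The pair $(\tau_1,\tau_2)$ on $H^2_{\mathbb D^2}$ does not have any non-trivial joint reducing subspace.
   Context: $H^2_{\mathbb D^2}$ is the Hardy space of the bidisc with orthonormal basis $\{z_1^{m_1}z_2^{m_2}\}_{m_1,m_2\ge0}$; $M_{z_1},M_{z_2}$ are the coordinate multiplication operators. $U$ is the unitary on $H^2_{\mathbb D^2}$ with $U(z_1^{m_1}z_2^{m_2})=z_1^{m_1+2}z_2^{m_2}$ if $m_1\ge m_2$, $=z_1^{m_1+1}z_2^{m_2-1}$ if $m_1+1=m_2$, $=z_1^{m_1}z_2^{m_2-2}$ if $m_1+2\le m_2$; $\tau_1=U^*M_{z_1}$, $\tau_2=M_{z_2}U$. A non-trivial joint reducing subspace is a closed subspace, different from $\{0\}$ and the whole space, reducing both operators. *)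

theory Defs
  imports "HOL-Analysis.Analysis"
begin

text \<open>H^2 of the bidisc, realised via its orthonormal basis z1^m1 z2^m2 as the
space of square-summable coefficient families indexed by nat x nat.\<close>

type_synonym coeffs = "nat \<times> nat \<Rightarrow> complex"

definition H2 :: "coeffs set" where
  "H2 = {f. (\<lambda>k. (cmod (f k))\<^sup>2) summable_on UNIV}"

definition h2_inner :: "coeffs \<Rightarrow> coeffs \<Rightarrow> complex" where
  "h2_inner f g = infsum (\<lambda>k. f k * cnj (g k)) UNIV"

definition h2_norm :: "coeffs \<Rightarrow> real" where
  "h2_norm f = sqrt (infsum (\<lambda>k. (cmod (f k))\<^sup>2) UNIV)"

definition closed_subspace :: "coeffs set \<Rightarrow> bool" where
  "closed_subspace M \<longleftrightarrow> M \<subseteq> H2 \<and> (\<lambda>_. 0) \<in> M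
     \<and> (\<forall>f\<in>M. \<forall>g\<in>M. (\<lambda>k. f k + g k) \<in> M)
     \<and> (\<forall>c::complex. \<forall>f\<in>M. (\<lambda>k. c * f k) \<in> M)
     \<and> (\<forall>x g. (\<forall>n. x n \<in> M) \<and> g \<in> H2 \<and> (\<lambda>n. h2_norm (\<lambda>k. x n k - g k)) \<longlonglongrightarrow> 0 \<longrightarrow> g \<in> M)"

definition is_adjoint :: "(coeffs \<Rightarrow> coeffs) \<Rightarrow> (coeffs \<Rightarrow> coeffs) \<Rightarrow> bool" where
  "is_adjoint T S \<longleftrightarrow> (\<forall>f\<in>H2. S f \<in> H2)
     \<and> (\<forall>f\<in>H2. \<forall>g\<in>H2. h2_inner (T f) g = h2_inner f (S g))"

definition reduces :: "(coeffs \<Rightarrow> coeffs) \<Rightarrow> coeffs set \<Rightarrow> bool" where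
  "reduces T M \<longleftrightarrow> T ` M \<subseteq> M \<and> (\<exists>S. is_adjoint T S \<and> S ` M \<subseteq> M)"

definition Mz1 :: "coeffs \<Rightarrow> coeffs" where
  "Mz1 f = (\<lambda>(m1, m2). if m1 = 0 then 0 else f (m1 - 1, m2))"

definition Mz2 :: "coeffs \<Rightarrow> coeffs" where
  "Mz2 f = (\<lambda>(m1, m2). if m2 = 0 then 0 else f (m1, m2 - 1))"

text \<open>The index map: U (z1^m1 z2^m2) = z1^(fst (sigma (m1,m2))) z2^(snd (sigma (m1,m2))).\<close>
definition sigma :: "nat \<times> nat \<Rightarrow> nat \<times> nat" where
  "sigma = (\<lambda>(m1, m2). if m1 \<ge> m2 then (m1 + 2, m2)
                       else if m1 + 1 = m2 then (m1 + 1, m2 - 1)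
                       else (m1, m2 - 2))"

text \<open>U, the (continuous linear) extension of the basis map e_m \<mapsto> e_(sigma m),
  and its adjoint U*, which sends e_(sigma m) to e_m.\<close>
definition Uop :: "coeffs \<Rightarrow> coeffs" where
  "Uop f = (\<lambda>n. if n \<in> range sigma then f (inv sigma n) else 0)"

definition Uadj :: "coeffs \<Rightarrow> coeffs" where
  "Uadj f = f \<circ> sigma"

definition tau1 :: "coeffs \<Rightarrow> coeffs" where
  "tau1 f = Uadj (Mz1 f)"

definition tau2 :: "coeffs \<Rightarrow> coeffs" where
  "tau2 f = Mz2 (Uop f)"

end

theory Submission
  imports Defs
begin


definition sinv :: "nat \<times> nat \<Rightarrow> nat \<times> nat" where
  "sinv = (\<lambda>(a, b). if a \<ge> b + 2 then (a - 2, b) else if a = b + 1 then (b, b + 1) else (a, b + 2))"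

lemma sigma_sinv[simp]: "sigma (sinv y) = y"
  by (cases y) (auto simp: sigma_def sinv_def)

lemma sinv_sigma[simp]: "sinv (sigma x) = x"
  by (cases x) (auto simp: sigma_def sinv_def)

lemma inv_sigma: "inv sigma = sinv"
  by (metis inv_equality sigma_sinv sinv_sigma)

lemma range_sigma: "range sigma = UNIV"
  by (metis UNIV_I image_eqI sigma_sinv subsetI subset_antisym)

lemma Uop_eq: "Uop f = (\<lambda>n. f (sinv n))"
  by (simp add: Uop_def range_sigma inv_sigma)

lemma tau1_eq: "tau1 f m = (if fst (sigma m) = 0 then 0 else f (fst (sigma m) - 1, snd (sigma m)))"
  by (simp add: tau1_def Uadj_def Mz1_def split: prod.splits)

lemma tau2_eq: "tau2 f n = (if snd n = 0 then 0 else f (sinv (fst n, snd n - 1)))"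
  by (simp add: tau2_def Uop_eq Mz2_def split: prod.splits)

definition e :: "nat \<times> nat \<Rightarrow> coeffs" where
  "e k = (\<lambda>j. if j = k then 1 else 0)"

lemma e_H2: "e k \<in> H2"
proof -
  have "(\<lambda>j. (cmod (e k j))\<^sup>2) summable_on UNIV \<longleftrightarrow> (\<lambda>j. (cmod (e k j))\<^sup>2) summable_on {k}"
    by (rule summable_on_cong_neutral) (auto simp: e_def)
  then show ?thesis unfolding H2_def by simp
qed

lemma inner_e: "h2_inner (e j) g = cnj (g j)"
proof -
  have "infsum (\<lambda>k. e j k * cnj (g k)) UNIV = infsum (\<lambda>k. e j k * cnj (g k)) {j}"
    by (rule infsum_cong_neutral) (auto simp: e_def)
  then show ?thesis by (simp add: h2_inner_def e_def)
qed

lemma inner_e2: "h2_inner g (e j) = g j"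
proof -
  have "infsum (\<lambda>k. g k * cnj (e j k)) UNIV = infsum (\<lambda>k. g k * cnj (e j k)) {j}"
    by (rule infsum_cong_neutral) (auto simp: e_def)
  then show ?thesis by (simp add: h2_inner_def e_def)
qed

lemma adj_basis:
  assumes "is_adjoint T S" "g \<in> H2" "T (e k) = e j"
  shows "S g k = g j"
proof -
  have "h2_inner (T (e k)) g = h2_inner (e k) (S g)"
    using assms e_H2 unfolding is_adjoint_def by blast
  then have "cnj (g j) = cnj (S g k)" using assms(3) by (simp add: inner_e)
  then show ?thesis by simp
qed

definition psi1 :: "nat \<times> nat \<Rightarrow> nat \<times> nat" where
  "psi1 k = sinv (fst k + 1, snd k)"
definition psi2 :: "nat \<times> nat \<Rightarrow> nat \<times> nat" where
  "psi2 k = (fst (sigma k), snd (sigma k) + 1)"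

lemma sinv_iff: "(m = sinv y) \<longleftrightarrow> sigma m = y"
  by (metis sigma_sinv sinv_sigma)

lemma sinv_eq_iff: "(sinv y = m) \<longleftrightarrow> (y = sigma m)"
proof
  assume "sinv y = m" then show "y = sigma m" using sigma_sinv[of y] by simp
next
  assume "y = sigma m" then show "sinv y = m" by simp
qed

lemma sigma_eq_iff: "(sigma m = y) \<longleftrightarrow> (m = sinv y)"
proof
  assume "sigma m = y" then show "m = sinv y" using sinv_sigma[of m] by simp
next
  assume "m = sinv y" then show "sigma m = y" by simp
qed

lemma tau1_e: "tau1 (e k) = e (psi1 k)"
proof
  fix m
  show "tau1 (e k) m = e (psi1 k) m"
    unfolding tau1_eq e_def psi1_def sinv_iff
    by (cases k; cases "sigma m") auto
qed

lemma tau2_e: "tau2 (e k) = e (psi2 k)"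
proof
  fix n
  show "tau2 (e k) n = e (psi2 k) n"
  proof (cases n)
    case (Pair a b)
    have "(sinv (a, b - 1) = k) = (sigma k = (a, b - 1))" by (metis sinv_iff)
    then show ?thesis unfolding tau2_eq e_def psi2_def Pair
      by (cases "sigma k") auto
  qed
qed



lemma cs_add: "closed_subspace M \<Longrightarrow> f \<in> M \<Longrightarrow> g \<in> M \<Longrightarrow> (\<lambda>k. f k + g k) \<in> M"
  unfolding closed_subspace_def by blast
lemma cs_scale: "closed_subspace M \<Longrightarrow> f \<in> M \<Longrightarrow> (\<lambda>k. c * f k) \<in> M"
  unfolding closed_subspace_def by blast
lemma cs_zero: "closed_subspace M \<Longrightarrow> (\<lambda>_. 0) \<in> M"
  unfolding closed_subspace_def by blast
lemma cs_H2: "closed_subspace M \<Longrightarrow> f \<in> M \<Longrightarrow> f \<in> H2"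
  unfolding closed_subspace_def by blast
lemma cs_diff: "closed_subspace M \<Longrightarrow> f \<in> M \<Longrightarrow> g \<in> M \<Longrightarrow> (\<lambda>k. f k - g k) \<in> M"
proof -
  assume a: "closed_subspace M" "f \<in> M" "g \<in> M"
  then have "(\<lambda>k. f k + (\<lambda>k. (-1) * g k) k) \<in> M" using cs_add cs_scale by blast
  then show ?thesis by simp
qed

lemma cs_fin:
  assumes "closed_subspace M" "\<And>k. e k \<in> M" "finite F"
  shows "(\<lambda>k. if k \<in> F then g k else 0) \<in> M"
  using assms(3)
proof (induction F rule: finite_induct)
  case empty
  then show ?case using cs_zero[OF assms(1)] by simp
next
  case (insert x F)
  have "(\<lambda>k. (\<lambda>k. if k \<in> F then g k else 0) k + (\<lambda>k. g x * e x k) k) \<in> M"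
    using insert cs_add cs_scale assms by blast
  moreover have "(\<lambda>k. (\<lambda>k. if k \<in> F then g k else 0) k + (\<lambda>k. g x * e x k) k)
     = (\<lambda>k. if k \<in> insert x F then g k else 0)"
    using insert(2) by (auto simp: e_def)
  ultimately show ?case by simp
qed

lemma tail_tendsto:
  fixes p :: "nat \<times> nat \<Rightarrow> real"
  assumes "p summable_on UNIV" "\<And>k. p k \<ge> 0"
  shows "(\<lambda>n. infsum (\<lambda>k. if k \<in> prod_decode ` {..<n} then 0 else p k) UNIV) \<longlonglongrightarrow> 0"
proof -
  define s where "s = infsum p UNIV"
  have hs: "(p has_sum s) UNIV" using assms(1) s_def by simp
  have "((\<lambda>i. p (prod_decode i)) has_sum s) UNIV"
    using hs has_sum_reindex_bij_betw[OF bij_prod_decode] by blast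
  then have "(\<lambda>i. p (prod_decode i)) sums s" by (rule has_sum_imp_sums)
  then have lim: "(\<lambda>n. \<Sum>i<n. p (prod_decode i)) \<longlonglongrightarrow> s" by (simp add: sums_def)
  have eq: "infsum (\<lambda>k. if k \<in> prod_decode ` {..<n} then 0 else p k) UNIV = s - (\<Sum>i<n. p (prod_decode i))" for n
  proof -
    define F where "F = prod_decode ` {..<n}"
    have fin: "finite F" unfolding F_def by simp
    have s1: "p summable_on (- F)" using assms(1) summable_on_subset_banach by blast
    have s2: "p summable_on F" using fin by simp
    have "s = infsum p (F \<union> - F)" by (simp add: s_def)
    also have "\<dots> = infsum p F + infsum p (- F)" using s1 s2 by (intro infsum_Un_disjoint) auto
    also have "infsum p F = (\<Sum>i<n. p (prod_decode i))"
      using fin unfolding F_def by (simp add: sum.reindex inj_prod_decode)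
    also have "infsum p (- F) = infsum (\<lambda>k. if k \<in> F then 0 else p k) UNIV"
      by (rule infsum_cong_neutral) auto
    finally show ?thesis unfolding F_def by simp
  qed
  have "(\<lambda>n. s - (\<Sum>i<n. p (prod_decode i))) \<longlonglongrightarrow> s - s"
    by (intro tendsto_intros lim)
  then show ?thesis unfolding eq by simp
qed

lemma cs_all:
  assumes "closed_subspace M" "\<And>k. e k \<in> M" "g \<in> H2"
  shows "g \<in> M"
proof -
  define x where "x n = (\<lambda>k. if k \<in> prod_decode ` {..<n} then g k else 0)" for n
  have xM: "\<forall>n. x n \<in> M" unfolding x_def using cs_fin[OF assms(1,2)] by simp
  define p where "p k = (cmod (g k))\<^sup>2" for k
  have ps: "p summable_on UNIV" using assms(3) unfolding H2_def p_def by simp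
  have "(\<lambda>n. infsum (\<lambda>k. if k \<in> prod_decode ` {..<n} then 0 else p k) UNIV) \<longlonglongrightarrow> 0"
    by (rule tail_tendsto[OF ps]) (simp add: p_def)
  then have "(\<lambda>n. sqrt (infsum (\<lambda>k. if k \<in> prod_decode ` {..<n} then 0 else p k) UNIV)) \<longlonglongrightarrow> sqrt 0"
    by (intro tendsto_intros)
  moreover have "h2_norm (\<lambda>k. x n k - g k) = sqrt (infsum (\<lambda>k. if k \<in> prod_decode ` {..<n} then 0 else p k) UNIV)" for n
    unfolding h2_norm_def x_def p_def by (rule arg_cong[where f=sqrt], rule infsum_cong) auto
  ultimately have "(\<lambda>n. h2_norm (\<lambda>k. x n k - g k)) \<longlonglongrightarrow> 0" by simp
  then show ?thesis using assms(1,3) xM unfolding closed_subspace_def by blast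
qed



lemma reach:
  assumes z0: "(0,0) \<in> Z" and c1: "\<And>k. k \<in> Z \<Longrightarrow> psi1 k \<in> Z"
    and c2: "\<And>k. k \<in> Z \<Longrightarrow> psi2 k \<in> Z"
    and c3: "\<And>a b. (a,b) \<in> Z \<Longrightarrow> b \<le> a \<Longrightarrow> (a+1,b) \<in> Z"
    and c4: "\<And>a b. (a,b) \<in> Z \<Longrightarrow> a < b \<Longrightarrow> (a,b+1) \<in> Z"
  shows "k \<in> Z"
proof -
  have diag: "(b,b) \<in> Z" for b
  proof (induction b)
    case 0 then show ?case using z0 by simp
  next
    case (Suc b)
    have "psi2 (b,b) = (b+2,b+1)" by (simp add: psi2_def sigma_def)
    then have "(b+2,b+1) \<in> Z" using c2 Suc by metis
    moreover have "psi1 (b+2,b+1) = (Suc b, Suc b)" by (simp add: psi1_def sinv_def)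
    ultimately show ?case using c1 by metis
  qed
  have low: "(b+d,b) \<in> Z" for b d
    by (induction d) (use diag c3 in auto)
  have up: "(a,a+1+d) \<in> Z" for a d
  proof (induction d)
    case 0
    have "psi1 (a,a) = (a,a+1)" by (simp add: psi1_def sinv_def)
    then show ?case using c1 diag by (metis add_0_right)
  next
    case (Suc d)
    then show ?case using c4[of a "a+1+d"] by simp
  qed
  obtain a b where k: "k = (a,b)" by fastforce
  show ?thesis
  proof (cases "b \<le> a")
    case True
    then show ?thesis using low[of b "a-b"] k by simp
  next
    case False
    then show ?thesis using up[of a "b-a-1"] k by simp
  qed
qed

context
  fixes M S1 S2
  assumes cs: "closed_subspace M"
    and a1: "is_adjoint tau1 S1" and i1: "S1 ` M \<subseteq> M" and t1: "tau1 ` M \<subseteq> M"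
    and a2: "is_adjoint tau2 S2" and i2: "S2 ` M \<subseteq> M" and t2: "tau2 ` M \<subseteq> M"
begin

lemma S1_eq: "g \<in> H2 \<Longrightarrow> S1 g k = g (psi1 k)"
  using adj_basis[OF a1 _ tau1_e] by blast
lemma S2_eq: "g \<in> H2 \<Longrightarrow> S2 g k = g (psi2 k)"
  using adj_basis[OF a2 _ tau2_e] by blast

lemma S1M: "f \<in> M \<Longrightarrow> S1 f \<in> M" using i1 by blast
lemma S2M: "f \<in> M \<Longrightarrow> S2 f \<in> M" using i2 by blast
lemma t1M: "f \<in> M \<Longrightarrow> tau1 f \<in> M" using t1 by blast
lemma t2M: "f \<in> M \<Longrightarrow> tau2 f \<in> M" using t2 by blast

lemma D2: "f \<in> M \<Longrightarrow> (\<lambda>n. if snd n = 0 then f n else 0) \<in> M"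
proof -
  assume f: "f \<in> M"
  have hM: "tau2 (S2 f) \<in> M" using f S2M t2M by blast
  have "tau2 (S2 f) n = (if snd n = 0 then 0 else f n)" for n
  proof -
    have "S2 f (sinv (fst n, snd n - 1)) = f (psi2 (sinv (fst n, snd n - 1)))"
      using S2_eq cs_H2[OF cs f] by blast
    also have "psi2 (sinv (fst n, snd n - 1)) = (fst n, snd n - 1 + 1)" by (simp add: psi2_def)
    finally show ?thesis unfolding tau2_eq by (cases n) auto
  qed
  then have "(\<lambda>k. f k - tau2 (S2 f) k) = (\<lambda>n. if snd n = 0 then f n else 0)" by auto
  then show ?thesis using cs_diff[OF cs f hM] by simp
qed

lemma iso: "f \<in> M \<Longrightarrow> (\<lambda>k. if k = (0,0) then f (0,0) else 0) \<in> M"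
proof -
  assume f: "f \<in> M"
  define g where "g = (\<lambda>n. if snd n = 0 then f n else 0)"
  have gM: "g \<in> M" unfolding g_def using D2 f by blast
  define y where "y = (\<lambda>n. if snd n = 0 then tau1 g n else 0)"
  have yM: "y \<in> M" unfolding y_def using D2 t1M gM by blast
  have y: "y m = (if snd m = 0 then f (fst m + 1, 0) else 0)" for m
    by (cases m) (simp add: y_def tau1_eq sigma_def g_def)
  have z: "S1 y k = (if snd k = 0 \<and> fst k \<noteq> 0 then f k else 0)" for k
    using S1_eq[OF cs_H2[OF cs yM]] 
    by (cases k) (auto simp: y psi1_def sinv_def)
  have "(\<lambda>k. g k - S1 y k) \<in> M" using cs_diff[OF cs gM S1M[OF yM]] .
  moreover have "(\<lambda>k. g k - S1 y k) = (\<lambda>k. if k = (0,0) then f (0,0) else 0)"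
    by (auto simp: z g_def)
  ultimately show ?thesis by simp
qed

lemma caseB: assumes "\<forall>f\<in>M. f (0,0) = 0" shows "M = {\<lambda>_. 0}"
proof -
  let ?Z = "{k. \<forall>f\<in>M. f k = 0}"
  have "k \<in> ?Z" for k
  proof (rule reach)
    show "(0,0) \<in> ?Z" using assms by simp
    show "psi1 k \<in> ?Z" if "k \<in> ?Z" for k
    proof (clarsimp)
      fix f assume "f \<in> M"
      then have "S1 f k = 0" using that S1M by blast
      then show "f (psi1 k) = 0" using S1_eq[OF cs_H2[OF cs \<open>f \<in> M\<close>]] by simp
    qed
    show "psi2 k \<in> ?Z" if "k \<in> ?Z" for k
    proof (clarsimp)
      fix f assume "f \<in> M"
      then have "S2 f k = 0" using that S2M by blast
      then show "f (psi2 k) = 0" using S2_eq[OF cs_H2[OF cs \<open>f \<in> M\<close>]] by simp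
    qed
    show "(a+1,b) \<in> ?Z" if "(a,b) \<in> ?Z" "b \<le> a" for a b
    proof -
      have eq: "tau1 f (a,b) = f (a+1,b)" for f using that(2) by (simp add: tau1_eq sigma_def)
      then show ?thesis
      proof (clarsimp)
        fix f assume "f \<in> M"
        then have "tau1 f \<in> M" by (rule t1M)
        then have "tau1 f (a,b) = 0" using that(1) by blast
        then show "f (Suc a, b) = 0" using eq by simp
      qed
    qed
    show "(a,b+1) \<in> ?Z" if "(a,b) \<in> ?Z" "a < b" for a b
    proof -
      have eq: "tau2 f (a,b) = f (a,b+1)" for f using that(2) by (simp add: tau2_eq sinv_def)
      then show ?thesis
      proof (clarsimp)
        fix f assume "f \<in> M"
        then have "tau2 f \<in> M" by (rule t2M)
        then have "tau2 f (a,b) = 0" using that(1) by blast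
        then show "f (a, Suc b) = 0" using eq by simp
      qed
    qed
  qed
  then have "f = (\<lambda>_. 0)" if "f \<in> M" for f
  proof -
    have "f k = 0" for k using \<open>\<And>k. k \<in> ?Z\<close>[of k] that by blast
    then show ?thesis by (rule ext)
  qed
  then show ?thesis using cs_zero[OF cs] by blast
qed

lemma N3: assumes "e (a,b) \<in> M" "b \<le> a" shows "e (a+1,b) \<in> M"
proof -
  have "S1 (e (a,b)) = e (a+1,b)"
  proof
    fix n
    have 1: "(sinv (fst n + 1, snd n) = (a,b)) = ((fst n + 1, snd n) = sigma (a,b))"
      by (rule sinv_eq_iff)
    have 2: "S1 (e (a,b)) n = e (a,b) (psi1 n)" using S1_eq e_H2 by blast
    have 3: "sigma (a,b) = (a+2,b)" using assms(2) by (simp add: sigma_def)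
    have 4: "((fst n + 1, snd n) = (a+2,b)) = (n = (a+1,b))" by (cases n) auto
    have "e (a,b) (psi1 n) = e (a+1,b) n"
      unfolding e_def psi1_def 1 3 4 by simp
    then show "S1 (e (a,b)) n = e (a+1,b) n" using 2 by simp
  qed
  then show ?thesis using S1M[OF assms(1)] by simp
qed

lemma N4: assumes "e (a,b) \<in> M" "a < b" shows "e (a,b+1) \<in> M"
proof -
  have "S2 (e (a,b)) = e (a,b+1)"
  proof
    fix n
    have 1: "(sigma n = (a, b - 1)) = (n = sinv (a, b - 1))"
      by (rule sigma_eq_iff)
    have 2: "S2 (e (a,b)) n = e (a,b) (psi2 n)" using S2_eq e_H2 by blast
    have 3: "sinv (a, b - 1) = (a, b+1)" using assms(2) by (simp add: sinv_def)
    have 4: "((fst (sigma n), snd (sigma n) + 1) = (a,b)) = (sigma n = (a, b - 1))"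
      using assms(2) by (cases "sigma n") auto
    have "e (a,b) (psi2 n) = e (a,b+1) n"
      unfolding e_def psi2_def 4 1 3 by simp
    then show "S2 (e (a,b)) n = e (a,b+1) n" using 2 by simp
  qed
  then show ?thesis using S2M[OF assms(1)] by simp
qed

lemma caseA: assumes "f \<in> M" "f (0,0) \<noteq> 0" shows "M = H2"
proof -
  define h where "h = (\<lambda>k::nat\<times>nat. if k = (0,0) then f (0,0) else 0)"
  have hM: "h \<in> M" unfolding h_def by (rule iso[OF assms(1)])
  have "(\<lambda>k. (1 / f (0,0)) * h k) \<in> M" by (rule cs_scale[OF cs hM])
  moreover have "(\<lambda>k. (1 / f (0,0)) * h k) = e (0,0)"
    by (rule ext) (simp add: h_def e_def assms(2))
  ultimately have e0: "e (0,0) \<in> M" by simp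
  have "k \<in> {k. e k \<in> M}" for k
  proof (rule reach)
    show "(0,0) \<in> {k. e k \<in> M}" using e0 by simp
    show "psi1 k \<in> {k. e k \<in> M}" if "k \<in> {k. e k \<in> M}" for k
      using that t1M[of "e k"] tau1_e[of k] by simp
    show "psi2 k \<in> {k. e k \<in> M}" if "k \<in> {k. e k \<in> M}" for k
      using that t2M[of "e k"] tau2_e[of k] by simp
    show "(a+1,b) \<in> {k. e k \<in> M}" if "(a,b) \<in> {k. e k \<in> M}" "b \<le> a" for a b
      using N3[of a b] that by simp
    show "(a,b+1) \<in> {k. e k \<in> M}" if "(a,b) \<in> {k. e k \<in> M}" "a < b" for a b
      using N4[of a b] that by simp
  qed
  then have "\<And>k. e k \<in> M" by simp
  then have "H2 \<subseteq> M" using cs_all[OF cs] by blast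
  then show ?thesis using cs unfolding closed_subspace_def by blast
qed

end

theorem lemma3p9:
  shows "\<not> (\<exists>M. closed_subspace M \<and> M \<noteq> {\<lambda>_. 0} \<and> M \<noteq> H2
              \<and> reduces tau1 M \<and> reduces tau2 M)"
proof
  assume "\<exists>M. closed_subspace M \<and> M \<noteq> {\<lambda>_. 0} \<and> M \<noteq> H2 \<and> reduces tau1 M \<and> reduces tau2 M"
  then obtain M where cs: "closed_subspace M" "M \<noteq> {\<lambda>_. 0}" "M \<noteq> H2"
    and r1: "reduces tau1 M" and r2: "reduces tau2 M" by blast
  from r1 obtain S1 where r1': "tau1 ` M \<subseteq> M" "is_adjoint tau1 S1" "S1 ` M \<subseteq> M"
    unfolding reduces_def by blast
  from r2 obtain S2 where r2': "tau2 ` M \<subseteq> M" "is_adjoint tau2 S2" "S2 ` M \<subseteq> M"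
    unfolding reduces_def by blast
  note r = r1' r2'
  show False
  proof (cases "\<forall>f\<in>M. f (0,0) = 0")
    case True
    have "M = {\<lambda>_. 0}" by (rule caseB[OF cs(1) r(2,3,1,5,6,4) True])
    then show False using cs(2) by simp
  next
    case False
    then obtain f where f: "f \<in> M" "f (0,0) \<noteq> 0" by blast
    have "M = H2" by (rule caseA[OF cs(1) r(2,3,1,5,6,4) f])
    then show False using cs(3) by simp
  qed
qed

end
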